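(* Let $G$ be a group and $s,t\in G$, $s\ne t$, such that $\Gamma=\Phi(G,\{s,t\})$ is a simple graph. If $t$ has order $2$, then $\Gamma$ is an incidence graph, i.e. there is a multigraph $\Gamma'$ with $\Gamma\cong I\Gamma'$.
   Context: $\Phi(G,\{s,t\})$ is the multigraph with vertex set $V_s\cup V_t$, $V_s=\{\langle s\rangle x: x\in G\}$, $V_t=\{\langle t\rangle y : y\in G\}$ (right cosets), with one edge labeled $g$ between $\langle s\rangle x$ and $\langle t\rangle y$ for each $g\in\langle s\rangle x\cap\langle t\rangle y$, and no other edges. A simple graph has no loops and no parallel edges. For a multigraph $\Gamma'=(V',E',\psi')$ (loops and parallel edges allowed), the incidence graph $I\Gamma'$ is the simple graph with vertex set $V'\cup E'$ in which each $a\in E'$ is adjacent exactly to its end-points. *)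

theory Defs
  imports "HOL-Algebra.Algebra"
begin

text \<open>A multigraph (V, E, psi): loops and parallel edges allowed; psi e is the set of
  end-points of e (one vertex for a loop, two for a proper edge).\<close>
definition multigraph :: "'v set \<Rightarrow> 'e set \<Rightarrow> ('e \<Rightarrow> 'v set) \<Rightarrow> bool" where
  "multigraph V E psi \<longleftrightarrow> (\<forall>e\<in>E. psi e \<subseteq> V \<and> finite (psi e) \<and> 1 \<le> card (psi e) \<and> card (psi e) \<le> 2)"

definition simple_multigraph :: "'v set \<Rightarrow> 'e set \<Rightarrow> ('e \<Rightarrow> 'v set) \<Rightarrow> bool" where
  "simple_multigraph V E psi \<longleftrightarrow> multigraph V E psi \<and> (\<forall>e\<in>E. card (psi e) = 2) \<and> inj_on psi E"

definition adj_of :: "'e set \<Rightarrow> ('e \<Rightarrow> 'v set) \<Rightarrow> 'v \<Rightarrow> 'v \<Rightarrow> bool" where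
  "adj_of E psi u v \<longleftrightarrow> u \<noteq> v \<and> (\<exists>e\<in>E. psi e = {u, v})"

definition inc_vertices :: "'v set \<Rightarrow> 'e set \<Rightarrow> ('v + 'e) set" where
  "inc_vertices V E = V <+> E"

fun inc_adj :: "('e \<Rightarrow> 'v set) \<Rightarrow> ('v + 'e) \<Rightarrow> ('v + 'e) \<Rightarrow> bool" where
  "inc_adj psi (Inl v) (Inr e) \<longleftrightarrow> v \<in> psi e"
| "inc_adj psi (Inr e) (Inl v) \<longleftrightarrow> v \<in> psi e"
| "inc_adj psi _ _ \<longleftrightarrow> False"

definition graph_iso :: "'a set \<Rightarrow> ('a \<Rightarrow> 'a \<Rightarrow> bool) \<Rightarrow> 'b set \<Rightarrow> ('b \<Rightarrow> 'b \<Rightarrow> bool) \<Rightarrow> bool" where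
  "graph_iso V1 A1 V2 A2 \<longleftrightarrow> (\<exists>f. bij_betw f V1 V2 \<and> (\<forall>u\<in>V1. \<forall>v\<in>V1. A1 u v \<longleftrightarrow> A2 (f u) (f v)))"

text \<open>The coset graph Phi(G,{s,t}): vertices Inl (<s>x) and Inr (<t>y) (right cosets),
  and one edge (A, B, g) for each g in the intersection of A and B.\<close>
definition Phi_vertices :: "('a, 'b) monoid_scheme \<Rightarrow> 'a \<Rightarrow> 'a \<Rightarrow> ('a set + 'a set) set" where
  "Phi_vertices G s t =
     (\<lambda>x. generate G {s} #>\<^bsub>G\<^esub> x) ` carrier G <+> (\<lambda>y. generate G {t} #>\<^bsub>G\<^esub> y) ` carrier G"

definition Phi_edges :: "('a, 'b) monoid_scheme \<Rightarrow> 'a \<Rightarrow> 'a \<Rightarrow> ('a set \<times> 'a set \<times> 'a) set" where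
  "Phi_edges G s t = {(A, B, g). A \<in> (\<lambda>x. generate G {s} #>\<^bsub>G\<^esub> x) ` carrier G \<and>
                                 B \<in> (\<lambda>y. generate G {t} #>\<^bsub>G\<^esub> y) ` carrier G \<and> g \<in> A \<inter> B}"

definition Phi_ends :: "('a set \<times> 'a set \<times> 'a) \<Rightarrow> ('a set + 'a set) set" where
  "Phi_ends e = (case e of (A, B, g) \<Rightarrow> {Inl A, Inr B})"

end

theory Submission
  imports Defs
begin

lemma gen_t_sub:
  assumes "group G" "t \<in> carrier G" "t \<otimes>\<^bsub>G\<^esub> t = \<one>\<^bsub>G\<^esub>"
  shows "generate G {t} \<subseteq> {\<one>\<^bsub>G\<^esub>, t}"
proof
  fix x assume "x \<in> generate G {t}"
  then show "x \<in> {\<one>\<^bsub>G\<^esub>, t}"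
  proof (induction rule: generate.induct)
    case (inv h)
    then have "inv\<^bsub>G\<^esub> t = t" using assms group.inv_equality by fastforce
    then show ?case using inv by auto
  next
    case (eng h1 h2)
    then show ?case using assms by (auto simp: group.is_monoid monoid.l_one monoid.r_one monoid.one_closed)
  qed auto
qed

lemma ends_Inr: "\<exists>b. Inr b \<in> Phi_ends e"
  by (cases e) (auto simp: Phi_ends_def)

lemma ends_Inl: "\<exists>a. Inl a \<in> Phi_ends e"
  by (cases e) (auto simp: Phi_ends_def)

lemma adjLL: "\<not> adj_of E Phi_ends (Inl A) (Inl A')"
proof
  assume "adj_of E Phi_ends (Inl A) (Inl A')"
  then obtain e where "Phi_ends e = {Inl A, Inl A'}" unfolding adj_of_def by blast
  moreover obtain b where "Inr b \<in> Phi_ends e" using ends_Inr by blast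
  ultimately show False by simp
qed

lemma adjRR: "\<not> adj_of E Phi_ends (Inr A) (Inr A')"
proof
  assume "adj_of E Phi_ends (Inr A) (Inr A')"
  then obtain e where "Phi_ends e = {Inr A, Inr A'}" unfolding adj_of_def by blast
  moreover obtain b where "Inl b \<in> Phi_ends e" using ends_Inl by blast
  ultimately show False by simp
qed

lemma ends_eq: "Phi_ends e = {Inl A, Inr B} \<Longrightarrow> \<exists>g. e = (A, B, g)"
proof (cases e)
  case (fields a b g)
  assume "Phi_ends e = {Inl A, Inr B}"
  then have "{Inl a, Inr b} = {Inl A, Inr B}" using fields by (simp add: Phi_ends_def)
  then have "a = A" "b = B" by (auto simp: doubleton_eq_iff)
  then show ?thesis using fields by blast
qed

theorem proposition8:
  fixes G (structure) and s t :: 'a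
  assumes "group G"
    and "s \<in> carrier G" and "t \<in> carrier G" and "s \<noteq> t"
    and "simple_multigraph (Phi_vertices G s t) (Phi_edges G s t) Phi_ends"
    and "group.ord G t = 2"
  shows "\<exists>(V' :: ('a set + 'a set) set) (E' :: ('a set + 'a set) set) psi'.
           multigraph V' E' psi' \<and>
           graph_iso (Phi_vertices G s t) (adj_of (Phi_edges G s t) Phi_ends)
                     (inc_vertices V' E') (inc_adj psi')"
proof -
  interpret group G by fact
  define H where "H = generate G {s}"
  define K where "K = generate G {t}"
  define L where "L = (\<lambda>x. H #> x) ` carrier G"
  define R where "R = (\<lambda>y. K #> y) ` carrier G"
  have HS: "subgroup H G" unfolding H_def using assms(2) generate_is_subgroup by auto
  have KS: "subgroup K G" unfolding K_def using assms(3) generate_is_subgroup by auto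
  have tt: "t \<otimes> t = \<one>"
    using pow_ord_eq_1[OF assms(3)] assms(6) by (simp add: numeral_2_eq_2 assms(3))
  have Ksub: "K \<subseteq> {\<one>, t}" unfolding K_def using gen_t_sub[OF assms(1,3) tt] .
  define psi :: "'a set + 'a set \<Rightarrow> ('a set + 'a set) set" where "psi = (\<lambda>e. case e of Inl _ \<Rightarrow> {} | Inr B \<Rightarrow> (\<lambda>g. Inl (H #> g)) ` B)"
  define f where "f = (\<lambda>u::'a set + 'a set. case u of Inl _ \<Rightarrow> (Inl u :: ('a set + 'a set) + ('a set + 'a set)) | Inr _ \<Rightarrow> Inr u)"
  have PV: "Phi_vertices G s t = L <+> R" unfolding Phi_vertices_def L_def R_def H_def K_def by simp
  have mg: "multigraph (Inl ` L :: ('a set + 'a set) set) (Inr ` R :: ('a set + 'a set) set) psi"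
    unfolding multigraph_def
  proof
    fix e :: "'a set + 'a set" assume "e \<in> Inr ` R"
    then obtain y where y: "y \<in> carrier G" "e = (Inr (K #> y) :: 'a set + 'a set)" unfolding R_def by auto
    have Bsub: "K #> y \<subseteq> {y, t \<otimes> y}" using Ksub y(1) assms(3) by (auto simp: r_coset_def)
    have Bne: "y \<in> K #> y" using rcos_self[OF y(1) KS] .
    have Bc: "K #> y \<subseteq> carrier G" using r_coset_subset_G[OF subgroup.subset[OF KS] y(1)] .
    have pe: "psi e = (\<lambda>g. Inl (H #> g)) ` (K #> y)" using y by (simp add: psi_def)
    have fin: "finite (K #> y)" using Bsub finite_subset by blast
    have "card (K #> y) \<le> 2"
    proof -
      have "card {y, t \<otimes> y} \<le> 2" by (simp add: card_insert_if)
      then show ?thesis using card_mono[OF _ Bsub] by simp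
    qed
    then have c2: "card (psi e) \<le> 2" unfolding pe using card_image_le[OF fin] order_trans by blast
    have c1: "1 \<le> card (psi e)" unfolding pe using fin Bne
      by (metis One_nat_def Suc_leI card_gt_0_iff empty_iff finite_imageI image_is_empty)
    have "psi e \<subseteq> Inl ` L" unfolding pe L_def using Bc by auto
    then show "psi e \<subseteq> Inl ` L \<and> finite (psi e) \<and> 1 \<le> card (psi e) \<and> card (psi e) \<le> 2"
      using c1 c2 fin pe by auto
  qed
  have key: "(\<exists>g. g \<in> A \<and> g \<in> B) \<longleftrightarrow> Inl A \<in> psi (Inr B)" if AL: "A \<in> L" and BR: "B \<in> R" for A B
  proof -
    obtain x where x: "x \<in> carrier G" "A = H #> x" using AL unfolding L_def by auto
    obtain y where y: "y \<in> carrier G" "B = K #> y" using BR unfolding R_def by auto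
    have Bc: "B \<subseteq> carrier G" using r_coset_subset_G[OF subgroup.subset[OF KS] y(1)] y by simp
    show ?thesis
    proof
      assume "\<exists>g. g \<in> A \<and> g \<in> B"
      then obtain g where g: "g \<in> A" "g \<in> B" by auto
      have "A = H #> g" using repr_independence[OF _ x(1) HS] g x by simp
      then show "Inl A \<in> psi (Inr B)" using g by (auto simp: psi_def)
    next
      assume "Inl A \<in> psi (Inr B)"
      then obtain g where g: "g \<in> B" "A = H #> g" by (auto simp: psi_def)
      then have "g \<in> A" using rcos_self[OF _ HS] Bc by auto
      then show "\<exists>g. g \<in> A \<and> g \<in> B" using g by auto
    qed
  qed
  have adjLR: "adj_of (Phi_edges G s t) Phi_ends (Inl A) (Inr B) \<longleftrightarrow> (\<exists>g. g \<in> A \<and> g \<in> B)"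
    if AL0: "A \<in> L" and BR0: "B \<in> R" for A B
  proof
    assume "adj_of (Phi_edges G s t) Phi_ends (Inl A) (Inr B)"
    then obtain e where e: "e \<in> Phi_edges G s t" "Phi_ends e = {Inl A, Inr B}" unfolding adj_of_def by blast
    obtain g where "e = (A, B, g)" using ends_eq[OF e(2)] by blast
    then have "(A, B, g) \<in> Phi_edges G s t" using e(1) by simp
    then show "\<exists>g. g \<in> A \<and> g \<in> B" unfolding Phi_edges_def by blast
  next
    assume "\<exists>g. g \<in> A \<and> g \<in> B"
    then obtain g where g: "g \<in> A" "g \<in> B" by blast
    have A1: "A \<in> (\<lambda>x. generate G {s} #> x) ` carrier G" using AL0 unfolding L_def H_def .
    have B1: "B \<in> (\<lambda>x. generate G {t} #> x) ` carrier G" using BR0 unfolding R_def K_def .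
    have "(A, B, g) \<in> Phi_edges G s t" unfolding Phi_edges_def using A1 B1 g by blast
    moreover have "Phi_ends (A, B, g) = {Inl A, Inr B}" by (simp add: Phi_ends_def)
    ultimately show "adj_of (Phi_edges G s t) Phi_ends (Inl A) (Inr B)" unfolding adj_of_def by blast
  qed
  have adjsym: "adj_of E p u v = adj_of E p v u" for E p and u v :: "'a set + 'a set"
    unfolding adj_of_def by (auto simp: insert_commute)
  have bij: "bij_betw f (L <+> R) (inc_vertices (Inl ` L) (Inr ` R))"
    unfolding bij_betw_def inc_vertices_def
  proof
    show "inj_on f (L <+> R)" unfolding inj_on_def f_def by (auto split: sum.splits)
    show "f ` (L <+> R) = (Inl ` L :: ('a set + 'a set) set) <+> (Inr ` R :: ('a set + 'a set) set)"
    proof (intro equalityI subsetI)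
      fix x :: "('a set + 'a set) + ('a set + 'a set)"
      assume "x \<in> (Inl ` L :: ('a set + 'a set) set) <+> (Inr ` R :: ('a set + 'a set) set)"
      then show "x \<in> f ` (L <+> R)"
      proof (elim PlusE)
        fix a assume a: "a \<in> Inl ` L" "x = Inl a"
        then obtain A where "a = Inl A" "A \<in> L" by auto
        then have "a \<in> L <+> R" "f a = x" using a by (auto simp: f_def)
        then show ?thesis by blast
      next
        fix a assume a: "a \<in> Inr ` R" "x = Inr a"
        then obtain B where "a = Inr B" "B \<in> R" by auto
        then have "a \<in> L <+> R" "f a = x" using a by (auto simp: f_def)
        then show ?thesis by blast
      qed
    qed (auto simp: f_def)
  qed
  have iso: "graph_iso (Phi_vertices G s t) (adj_of (Phi_edges G s t) Phi_ends)
                     (inc_vertices (Inl ` L) (Inr ` R)) (inc_adj psi)"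
    unfolding graph_iso_def PV
  proof (intro exI[of _ f] conjI bij ballI)
    fix u v assume u: "u \<in> L <+> R" and v: "v \<in> L <+> R"
    show "adj_of (Phi_edges G s t) Phi_ends u v = inc_adj psi (f u) (f v)"
    proof (cases u)
      case (Inl A)
      then have A: "A \<in> L" using u by auto
      show ?thesis
      proof (cases v)
        case (Inl A') then show ?thesis using \<open>u = Inl A\<close> adjLL by (simp add: f_def)
      next
        case (Inr B) then have BR: "B \<in> R" using v by auto
        have e1: "adj_of (Phi_edges G s t) Phi_ends (Inl A) (Inr B) = (Inl A \<in> psi (Inr B))"
          using adjLR[OF A BR] key[OF A BR] by (rule trans)
        have "f u = Inl (Inl A)" "f v = Inr (Inr B)" using Inr \<open>u = Inl A\<close> by (simp_all add: f_def)
        then show ?thesis using e1 Inr \<open>u = Inl A\<close> by simp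
      qed
    next
      case (Inr B)
      then have B: "B \<in> R" using u by auto
      show ?thesis
      proof (cases v)
        case (Inl A) then have AL: "A \<in> L" using v by auto
        have e1: "adj_of (Phi_edges G s t) Phi_ends (Inl A) (Inr B) = (Inl A \<in> psi (Inr B))"
          using adjLR[OF AL B] key[OF AL B] by (rule trans)
        have e2: "adj_of (Phi_edges G s t) Phi_ends (Inr B) (Inl A) = adj_of (Phi_edges G s t) Phi_ends (Inl A) (Inr B)"
          by (rule adjsym)
        have "f u = Inr (Inr B)" "f v = Inl (Inl A)" using Inl \<open>u = Inr B\<close> by (simp_all add: f_def)
        then show ?thesis using e1 e2 Inl \<open>u = Inr B\<close> by simp
      next
        case (Inr B') then show ?thesis using \<open>u = Inr B\<close> adjRR by (simp add: f_def)
      qed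
    qed
  qed
  show ?thesis using mg iso by (intro exI conjI)
qed

end
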